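(* Let $p\in\mathcal{P}_\tau$ and $1\le i\le N$. Then $\mathcal{D}_ip=0$ if and only if $\mathcal{U}_ip=p+\kappa\,\omega_ip$.
   Context: $\tau$ is a partition of $N$ and $\tau$ also denotes an irreducible representation of the symmetric group $\mathcal{S}_N$ on a vector space $V_\tau$ (over $\mathbb{R}(\kappa)$, $\kappa$ a parameter). $\mathcal{P}_\tau=\mathcal{P}\otimes V_\tau$ is the space of $V_\tau$-valued polynomials in $x=(x_1,\dots,x_N)$, with $\mathcal{S}_N$-action $wp(x)=\tau(w)p(xw)$ where $(xw)_i=x_{w(i)}$; $(i,j)$ denotes a transposition and $x(i,j)$ the vector $x$ with $x_i,x_j$ interchanged. Dunkl operators: $\mathcal{D}_i(p(x)\otimes T)=\frac{\partial p}{\partial x_i}\otimes T+\kappa\sum_{j\ne i}\frac{p(x)-p(x(i,j))}{x_i-x_j}\otimes\tau((i,j))T$; Cherednik–Dunkl operators: $\mathcal{U}_i(p(x)\otimes T)=\mathcal{D}_i(x_ip(x)\otimes T)-\kappa\sum_{j=1}^{i-1}p(x(i,j))\otimes\tau((i,j))T$ (both extended linearly). The Jucys–Murphy elements are $\omega_i=\sum_{j=i+1}^N(i,j)$ for $1\le i<N$ and $\omega_N=0$, acting on $\mathcal{P}_\tau$ through the $\mathcal{S}_N$-action. *)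

theory Defs
  imports "HOL-Analysis.Analysis" "HOL-Computational_Algebra.Fraction_Field"
    "HOL-Combinatorics.Transposition"
begin

type_synonym rk = "real poly fract"

definition kappa :: rk where
  "kappa = Fract [:0, 1:] 1"

text \<open>The representation space V_tau is modelled as rk^'n (a finite-dimensional
space over R(kappa) with a chosen basis); tau maps permutations of {1..N}
to matrices.\<close>

definition is_rep :: "nat \<Rightarrow> ((nat \<Rightarrow> nat) \<Rightarrow> rk^'n^'n) \<Rightarrow> bool" where
  "is_rep N tau \<longleftrightarrow> tau id = mat 1 \<and>
     (\<forall>s r. s permutes {1..N} \<longrightarrow> r permutes {1..N} \<longrightarrow> tau (s \<circ> r) = tau s ** tau r)"

definition ksubspace :: "(rk^'n) set \<Rightarrow> bool" where
  "ksubspace W \<longleftrightarrow> 0 \<in> W \<and> (\<forall>v\<in>W. \<forall>w\<in>W. v + w \<in> W) \<and> (\<forall>c v. v \<in> W \<longrightarrow> c *s v \<in> W)"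

definition irreducible_rep :: "nat \<Rightarrow> ((nat \<Rightarrow> nat) \<Rightarrow> rk^'n^'n) \<Rightarrow> bool" where
  "irreducible_rep N tau \<longleftrightarrow>
     (\<forall>W. ksubspace W \<and> (\<forall>s. s permutes {1..N} \<longrightarrow> (\<forall>v\<in>W. tau s *v v \<in> W))
        \<longrightarrow> W = {0} \<or> W = UNIV)"

text \<open>V_tau-valued polynomials in x_1..x_N: coefficient functions from exponent
vectors (nat \<Rightarrow> nat) to V_tau, finitely supported, involving only variables 1..N.\<close>
type_synonym 'n vpoly = "(nat \<Rightarrow> nat) \<Rightarrow> rk^'n"

definition is_vpoly :: "nat \<Rightarrow> 'n::finite vpoly \<Rightarrow> bool" where
  "is_vpoly N p \<longleftrightarrow> finite {a. p a \<noteq> 0} \<and>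
     (\<forall>a. p a \<noteq> 0 \<longrightarrow> (\<forall>k. a k \<noteq> 0 \<longrightarrow> k \<in> {1..N}))"

definition vderiv :: "nat \<Rightarrow> 'n::finite vpoly \<Rightarrow> 'n vpoly" where
  "vderiv i p = (\<lambda>a. of_nat (a i + 1) *s p (a(i := a i + 1)))"

definition vmulx :: "nat \<Rightarrow> 'n::finite vpoly \<Rightarrow> 'n vpoly" where
  "vmulx i p = (\<lambda>a. if a i = 0 then 0 else p (a(i := a i - 1)))"

text \<open>p(xw), where (xw)_k = x_(w k): coefficient of x^b in p(xw) is that of x^(b o w) in p\<close>
definition vsubst :: "(nat \<Rightarrow> nat) \<Rightarrow> 'n::finite vpoly \<Rightarrow> 'n vpoly" where
  "vsubst w p = (\<lambda>b. p (b \<circ> w))"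

definition vact :: "((nat \<Rightarrow> nat) \<Rightarrow> rk^'n^'n) \<Rightarrow> (nat \<Rightarrow> nat) \<Rightarrow> 'n::finite vpoly \<Rightarrow> 'n vpoly" where
  "vact tau w p = (\<lambda>b. tau w *v vsubst w p b)"

text \<open>divided difference (p(x) - p(x(i,j))) / (x_i - x_j), the unique polynomial quotient\<close>
definition vdivdiff :: "nat \<Rightarrow> nat \<Rightarrow> nat \<Rightarrow> 'n::finite vpoly \<Rightarrow> 'n vpoly" where
  "vdivdiff N i j p = (THE q. is_vpoly N q \<and>
     (\<forall>a. vmulx i q a - vmulx j q a = p a - vsubst (Transposition.transpose i j) p a))"

definition dunkl :: "nat \<Rightarrow> ((nat \<Rightarrow> nat) \<Rightarrow> rk^'n^'n) \<Rightarrow> nat \<Rightarrow> 'n::finite vpoly \<Rightarrow> 'n vpoly" where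
  "dunkl N tau i p = (\<lambda>a. vderiv i p a +
     kappa *s (\<Sum>j\<in>{1..N} - {i}. tau (Transposition.transpose i j) *v vdivdiff N i j p a))"

definition cherednik :: "nat \<Rightarrow> ((nat \<Rightarrow> nat) \<Rightarrow> rk^'n^'n) \<Rightarrow> nat \<Rightarrow> 'n::finite vpoly \<Rightarrow> 'n vpoly" where
  "cherednik N tau i p = (\<lambda>a. dunkl N tau i (vmulx i p) a -
     kappa *s (\<Sum>j\<in>{1..<i}. tau (Transposition.transpose i j) *v vsubst (Transposition.transpose i j) p a))"

definition jucys_murphy :: "nat \<Rightarrow> ((nat \<Rightarrow> nat) \<Rightarrow> rk^'n^'n) \<Rightarrow> nat \<Rightarrow> 'n::finite vpoly \<Rightarrow> 'n vpoly" where
  "jucys_murphy N tau i p = (\<lambda>a. \<Sum>j\<in>{i+1..N}. vact tau (Transposition.transpose i j) p a)"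

end

theory Submission imports Defs begin

lemma two_ne: "(2::rk) \<noteq> 0"
proof -
  have "(2::rk) = Fract (of_nat 2) 1" by (simp only: Fract_of_nat_eq) simp
  then show ?thesis by simp
qed

lemma half0: fixes x :: "rk^'n::finite" assumes "x = - x" shows "x = 0"
proof -
  have "x + x = 0" using assms by (metis add.right_inverse)
  then have "(2::rk) *s x = 0" by (simp add: vec_eq_iff)
  then show ?thesis using two_ne by (simp add: vec_eq_iff)
qed

lemma upd_comp_T: "i \<noteq> j \<Longrightarrow> (a(i:=x, j:=y)) \<circ> Transposition.transpose i j = a(i:=y, j:=x)"
  by (auto simp: fun_eq_iff Transposition.transpose_def)

lemma comp_TT: "(a \<circ> Transposition.transpose i j) \<circ> Transposition.transpose i j = a"
  by (simp add: comp_assoc)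

definition rr :: "nat \<Rightarrow> nat \<Rightarrow> 'n::finite vpoly \<Rightarrow> 'n vpoly" where
  "rr i j p a = p a - p (a \<circ> Transposition.transpose i j)"

definition SS :: "nat \<Rightarrow> nat \<Rightarrow> 'n::finite vpoly \<Rightarrow> 'n vpoly" where
  "SS i j p a = (\<Sum>k=0..a j. rr i j p (a(i := a i + k, j := a j - k)))"

definition qq :: "nat \<Rightarrow> nat \<Rightarrow> 'n::finite vpoly \<Rightarrow> 'n vpoly" where
  "qq i j p b = SS i j p (b(i := b i + 1))"

lemma rr_anti: "rr i j p (a \<circ> Transposition.transpose i j) = - rr i j p a"
  by (simp add: rr_def comp_TT)

lemma SS_zero:
  assumes ij: "i \<noteq> j" and ai: "a i = 0"
  shows "SS i j p a = 0"
proof -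
  define f where "f k = rr i j p (a(i := k, j := a j - k))" for k
  have S: "SS i j p a = sum f {0..a j}" using ai by (simp add: SS_def f_def)
  have "sum f {0..a j} = sum (\<lambda>k. f (a j + 0 - k)) {0..a j}"
    by (rule sum.atLeastAtMost_rev)
  also have "\<dots> = sum (\<lambda>k. - f k) {0..a j}"
  proof (rule sum.cong[OF refl])
    fix k assume k: "k \<in> {0..a j}"
    have "f (a j + 0 - k) = rr i j p (a(i := a j - k, j := k))"
      using k by (simp add: f_def)
    also have "\<dots> = rr i j p ((a(i := k, j := a j - k)) \<circ> Transposition.transpose i j)"
      using ij by (simp add: upd_comp_T)
    also have "\<dots> = - f k" by (simp add: rr_anti f_def)
    finally show "f (a j + 0 - k) = - f k" .
  qed
  also have "\<dots> = - sum f {0..a j}" by (simp add: sum_negf)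
  finally show ?thesis using S half0 by metis
qed

lemma SS_step:
  assumes ij: "i \<noteq> j" and aj: "a j > 0"
  shows "SS i j p a = rr i j p a + SS i j p (a(i := a i + 1, j := a j - 1))"
proof -
  obtain n where n: "a j = Suc n" using aj by (cases "a j") auto
  show ?thesis
    unfolding SS_def n using ij
    by (simp add: sum.atLeast0_atMost_Suc_shift n fun_upd_idem del: sum.cl_ivl_Suc)
qed

lemma SS_base: "a j = 0 \<Longrightarrow> SS i j p a = rr i j p a"
  by (simp add: SS_def fun_upd_idem)

lemma qq_eq:
  assumes ij: "i \<noteq> j"
  shows "vmulx i (qq i j p) a - vmulx j (qq i j p) a = p a - vsubst (Transposition.transpose i j) p a"
proof -
  have 1: "vmulx i (qq i j p) a = SS i j p a"
    by (cases "a i = 0") (auto simp: vmulx_def qq_def SS_zero[OF ij])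
  have 2: "vmulx j (qq i j p) a = (if a j = 0 then 0 else SS i j p (a(i := a i + 1, j := a j - 1)))"
    using ij by (simp add: vmulx_def qq_def fun_upd_twist)
  show ?thesis unfolding 1 2
    using SS_step[OF ij, of a p] SS_base[of a j i p]
    by (auto simp: rr_def vsubst_def)
qed

lemma supp_vsubst: "{a. p (a \<circ> Transposition.transpose i j) \<noteq> 0} \<subseteq> (\<lambda>b. b \<circ> Transposition.transpose i j) ` {a. p a \<noteq> 0}"
proof
  fix a assume "a \<in> {a. p (a \<circ> Transposition.transpose i j) \<noteq> 0}"
  then show "a \<in> (\<lambda>b. b \<circ> Transposition.transpose i j) ` {a. p a \<noteq> 0}"
    by (intro image_eqI[where x="a \<circ> Transposition.transpose i j"]) (auto simp: comp_TT)
qed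

lemma is_vpoly_vsubst:
  assumes "i \<in> {1..N}" "j \<in> {1..N}" "is_vpoly N p"
  shows "is_vpoly N (vsubst (Transposition.transpose i j) p)"
  unfolding is_vpoly_def
proof (intro conjI allI impI)
  show "finite {a. vsubst (Transposition.transpose i j) p a \<noteq> 0}"
    using assms(3) supp_vsubst[of p i j] unfolding is_vpoly_def vsubst_def
    by (meson finite_imageI finite_subset)
  fix a k assume a: "vsubst (Transposition.transpose i j) p a \<noteq> 0" and k: "a k \<noteq> 0"
  have "(a \<circ> Transposition.transpose i j) (Transposition.transpose i j k) \<noteq> 0"
    using k by simp
  then have "Transposition.transpose i j k \<in> {1..N}"
    using a assms(3) unfolding is_vpoly_def vsubst_def by blast
  then show "k \<in> {1..N}" using assms(1,2)
    by (auto simp: Transposition.transpose_def split: if_splits)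
qed

lemma is_vpoly_vmulx:
  assumes "i \<in> {1..N}" "is_vpoly N q"
  shows "is_vpoly N (vmulx i q)"
  unfolding is_vpoly_def
proof (intro conjI allI impI)
  have "{a. vmulx i q a \<noteq> 0} \<subseteq> (\<lambda>a. a(i := a i + 1)) ` {a. q a \<noteq> 0}"
  proof
    fix a assume "a \<in> {a. vmulx i q a \<noteq> 0}"
    then have "a i \<noteq> 0" "q (a(i := a i - 1)) \<noteq> 0" by (auto simp: vmulx_def split: if_splits)
    then show "a \<in> (\<lambda>a. a(i := a i + 1)) ` {a. q a \<noteq> 0}"
      by (intro image_eqI[where x="a(i := a i - 1)"]) auto
  qed
  then show "finite {a. vmulx i q a \<noteq> 0}"
    using assms(2) unfolding is_vpoly_def by (meson finite_imageI finite_subset)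
  fix a k assume a: "vmulx i q a \<noteq> 0" and k: "a k \<noteq> 0"
  then have "a i \<noteq> 0" "q (a(i := a i - 1)) \<noteq> 0" by (auto simp: vmulx_def split: if_splits)
  then show "k \<in> {1..N}" using assms k unfolding is_vpoly_def
    by (cases "k = i") auto
qed

lemma is_vpoly_add:
  assumes "is_vpoly N f" "is_vpoly N g"
  shows "is_vpoly N (\<lambda>a. f a + g a)"
  unfolding is_vpoly_def
proof (intro conjI allI impI)
  have "{a. f a + g a \<noteq> 0} \<subseteq> {a. f a \<noteq> 0} \<union> {a. g a \<noteq> 0}" by auto
  then show "finite {a. f a + g a \<noteq> 0}" using assms unfolding is_vpoly_def
    by (meson finite_UnI finite_subset)
  fix a k assume "f a + g a \<noteq> 0" "a k \<noteq> 0"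
  then show "k \<in> {1..N}" using assms unfolding is_vpoly_def
    by (metis add_0)
qed

lemma is_vpoly_qq:
  assumes ij: "i \<noteq> j" and i: "i \<in> {1..N}" and j: "j \<in> {1..N}" and p: "is_vpoly N p"
  shows "is_vpoly N (qq i j p)"
proof -
  have key: "\<exists>a. rr i j p a \<noteq> 0 \<and> b = a(i := b i, j := b j) \<and> b i \<le> a i \<and> b j \<le> a i + a j"
    if "qq i j p b \<noteq> 0" for b
  proof -
    have "SS i j p (b(i := b i + 1)) \<noteq> 0" using that by (simp add: qq_def)
    then obtain k where k: "k \<in> {0..b j}"
      and r: "rr i j p (b(i := b i + 1 + k, j := b j - k)) \<noteq> 0"
      using ij unfolding SS_def by (auto elim!: sum.not_neutral_contains_not_neutral)
    show ?thesis
      by (rule exI[where x="b(i := b i + 1 + k, j := b j - k)"]) (use ij k r in auto)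
  qed
  have rsub: "{a. rr i j p a \<noteq> 0} \<subseteq> {a. p a \<noteq> 0} \<union> {a. p (a \<circ> Transposition.transpose i j) \<noteq> 0}"
    by (auto simp: rr_def)
  have finr: "finite {a. rr i j p a \<noteq> 0}"
  proof -
    have "finite {a. p a \<noteq> 0}" using p unfolding is_vpoly_def by blast
    then have "finite ({a. p a \<noteq> 0} \<union> {a. p (a \<circ> Transposition.transpose i j) \<noteq> 0})"
      using supp_vsubst[of p i j] by (meson finite_UnI finite_imageI finite_subset)
    then show ?thesis using rsub by (rule finite_subset[rotated])
  qed
  have "{b. qq i j p b \<noteq> 0} \<subseteq> (\<Union>a\<in>{a. rr i j p a \<noteq> 0}.
            (\<lambda>(x, y). a(i := x, j := y)) ` ({..a i} \<times> {..a i + a j}))"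
  proof
    fix b assume "b \<in> {b. qq i j p b \<noteq> 0}"
    then obtain a where a: "rr i j p a \<noteq> 0" "b = a(i := b i, j := b j)" "b i \<le> a i" "b j \<le> a i + a j"
      using key by blast
    then show "b \<in> (\<Union>a\<in>{a. rr i j p a \<noteq> 0}. (\<lambda>(x, y). a(i := x, j := y)) ` ({..a i} \<times> {..a i + a j}))"
      by (intro UN_I[of a]) (auto intro!: image_eqI[where x="(b i, b j)"])
  qed
  moreover have "finite (\<Union>a\<in>{a. rr i j p a \<noteq> 0}.
            (\<lambda>(x, y). a(i := x, j := y)) ` ({..a i} \<times> {..a i + a j}))"
    using finr by auto
  ultimately have fin: "finite {b. qq i j p b \<noteq> 0}" by (rule finite_subset)
  show ?thesis unfolding is_vpoly_def
  proof (intro conjI allI impI fin)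
    fix b l assume b: "qq i j p b \<noteq> 0" and l: "b l \<noteq> 0"
    show "l \<in> {1..N}"
    proof (cases "l = i \<or> l = j")
      case True then show ?thesis using i j by auto
    next
      case False
      obtain a where a: "rr i j p a \<noteq> 0" "b = a(i := b i, j := b j)"
        using key[OF b] by blast
      have al: "a l \<noteq> 0" using a(2) l False by (metis fun_upd_other)
      have alT: "(a \<circ> Transposition.transpose i j) l \<noteq> 0" using al False by simp
      from a(1) have "p a \<noteq> 0 \<or> p (a \<circ> Transposition.transpose i j) \<noteq> 0"
        by (auto simp: rr_def)
      then show ?thesis using p al alT unfolding is_vpoly_def by blast
    qed
  qed
qed

lemma vmulx_shift: "vmulx i f (a(i := a i + 1)) = f a"
  by (simp add: vmulx_def)

lemma divdiff_unique:
  assumes ij: "i \<noteq> j"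
    and h: "\<And>a. vmulx i q1 a - vmulx j q1 a = vmulx i q2 a - vmulx j q2 a"
  shows "q1 = q2"
proof -
  have "\<forall>b. b j = n \<longrightarrow> q1 b = q2 b" for n
  proof (induction n)
    case 0
    show ?case
    proof (intro allI impI)
      fix b :: "nat \<Rightarrow> nat" assume b: "b j = 0"
      show "q1 b = q2 b" using h[of "b(i := b i + 1)"] b ij
        by (simp add: vmulx_def)
    qed
  next
    case (Suc m)
    show ?case
    proof (intro allI impI)
      fix b :: "nat \<Rightarrow> nat" assume b: "b j = Suc m"
      have "q1 (b(i := b i + 1, j := m)) = q2 (b(i := b i + 1, j := m))"
        using Suc.IH[rule_format, of "b(i := b i + 1, j := m)"] by simp
      have bj: "(b(i := b i + 1)) j = Suc m" using b ij by simp
      have e2: "vmulx j qk (b(i := b i + 1)) = qk ((b(i := b i + 1))(j := m))" for qk :: "'a vpoly"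
        by (simp only: vmulx_def bj) simp
      show "q1 b = q2 b" using h[of "b(i := b i + 1)"] \<open>q1 (b(i := b i + 1, j := m)) = q2 (b(i := b i + 1, j := m))\<close>
        unfolding e2 vmulx_shift by simp
    qed
  qed
  then show ?thesis by blast
qed

lemma vdivdiff_eq:
  assumes ij: "i \<noteq> j" and q: "is_vpoly N q"
    and e: "\<And>a. vmulx i q a - vmulx j q a = p a - vsubst (Transposition.transpose i j) p a"
  shows "vdivdiff N i j p = q"
  unfolding vdivdiff_def
proof (rule the_equality)
  show "is_vpoly N q \<and> (\<forall>a. vmulx i q a - vmulx j q a = p a - vsubst (Transposition.transpose i j) p a)"
    using q e by blast
  fix x assume "is_vpoly N x \<and> (\<forall>a. vmulx i x a - vmulx j x a = p a - vsubst (Transposition.transpose i j) p a)"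
  then show "x = q" using e divdiff_unique[OF ij, of x q] by metis
qed

lemma vdivdiff_spec:
  assumes ij: "i \<noteq> j" and i: "i \<in> {1..N}" and j: "j \<in> {1..N}" and p: "is_vpoly N p"
  shows "is_vpoly N (vdivdiff N i j p)"
    and "\<And>a. vmulx i (vdivdiff N i j p) a - vmulx j (vdivdiff N i j p) a
              = p a - vsubst (Transposition.transpose i j) p a"
proof -
  have e: "vdivdiff N i j p = qq i j p"
    by (rule vdivdiff_eq[OF ij is_vpoly_qq[OF ij i j p] qq_eq[OF ij]])
  show "is_vpoly N (vdivdiff N i j p)" unfolding e by (rule is_vpoly_qq[OF ij i j p])
  show "\<And>a. vmulx i (vdivdiff N i j p) a - vmulx j (vdivdiff N i j p) a
              = p a - vsubst (Transposition.transpose i j) p a" unfolding e by (rule qq_eq[OF ij])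
qed

lemma vmulx_add: "vmulx i (\<lambda>a. f a + g a) a = vmulx i f a + vmulx i g a"
  by (simp add: vmulx_def)

lemma vmulx_diff: "vmulx i (\<lambda>a. f a - g a) a = vmulx i f a - vmulx i g a"
  by (simp add: vmulx_def)

lemma vmulx_comm: "i \<noteq> j \<Longrightarrow> vmulx j (vmulx i Q) a = vmulx i (vmulx j Q) a"
  by (simp add: vmulx_def fun_upd_twist)

lemma vsubst_vmulx:
  assumes "i \<noteq> j"
  shows "vsubst (Transposition.transpose i j) (vmulx i p) b
       = vmulx j (vsubst (Transposition.transpose i j) p) b"
proof -
  have "(b \<circ> Transposition.transpose i j)(i := b j - 1) = b(j := b j - 1) \<circ> Transposition.transpose i j"
    using assms by (auto simp: fun_eq_iff Transposition.transpose_def)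
  then show ?thesis using assms by (simp add: vsubst_def vmulx_def)
qed

lemma divdiff_mulx:
  assumes ij: "i \<noteq> j" and i: "i \<in> {1..N}" and j: "j \<in> {1..N}" and p: "is_vpoly N p"
  shows "vdivdiff N i j (vmulx i p)
       = (\<lambda>a. vmulx i (vdivdiff N i j p) a + vsubst (Transposition.transpose i j) p a)"
proof (rule vdivdiff_eq[OF ij])
  let ?Q = "vdivdiff N i j p" and ?S = "vsubst (Transposition.transpose i j) p"
  show "is_vpoly N (\<lambda>a. vmulx i ?Q a + ?S a)"
    by (rule is_vpoly_add[OF is_vpoly_vmulx[OF i vdivdiff_spec(1)[OF ij i j p]] is_vpoly_vsubst[OF i j p]])
  fix a
  have QQ: "(\<lambda>a. vmulx i ?Q a - vmulx j ?Q a) = (\<lambda>a. p a - ?S a)"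
    using vdivdiff_spec(2)[OF ij i j p] by auto
  have "vmulx i (\<lambda>a. vmulx i ?Q a + ?S a) a - vmulx j (\<lambda>a. vmulx i ?Q a + ?S a) a
      = vmulx i (\<lambda>a. vmulx i ?Q a - vmulx j ?Q a) a + vmulx i ?S a - vmulx j ?S a"
    by (simp add: vmulx_add vmulx_diff vmulx_comm[OF ij])
  also have "\<dots> = vmulx i p a - vmulx j ?S a"
    unfolding QQ vmulx_diff by simp
  also have "\<dots> = vmulx i p a - vsubst (Transposition.transpose i j) (vmulx i p) a"
    by (simp add: vsubst_vmulx[OF ij])
  finally show "vmulx i (\<lambda>a. vmulx i ?Q a + ?S a) a - vmulx j (\<lambda>a. vmulx i ?Q a + ?S a) a
      = vmulx i p a - vsubst (Transposition.transpose i j) (vmulx i p) a" .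
qed

lemma vderiv_mulx: "vderiv i (vmulx i p) a = p a + vmulx i (vderiv i p) a"
proof (cases "a i = 0")
  case True then show ?thesis by (simp add: vderiv_def vmulx_def fun_upd_idem)
next
  case False
  then have "vmulx i (vderiv i p) a = of_nat (a i) *s p a"
    by (simp add: vderiv_def vmulx_def fun_upd_idem)
  moreover have "vderiv i (vmulx i p) a = of_nat (a i + 1) *s p a"
    by (simp add: vderiv_def vmulx_def fun_upd_idem)
  ultimately show ?thesis by (simp add: vector_sadd_rdistrib add.commute)
qed

lemma vmulx_dunkl:
  "vmulx i (dunkl N tau i p) a = vmulx i (vderiv i p) a +
     kappa *s (\<Sum>j\<in>{1..N} - {i}. tau (Transposition.transpose i j) *v vmulx i (vdivdiff N i j p) a)"
  by (cases "a i = 0") (simp_all add: vmulx_def dunkl_def)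

lemma dunkl_mulx:
  assumes i: "i \<in> {1..N}" and p: "is_vpoly N p"
  shows "dunkl N tau i (vmulx i p) a = vmulx i (dunkl N tau i p) a + p a +
     kappa *s (\<Sum>j\<in>{1..N} - {i}. tau (Transposition.transpose i j) *v vsubst (Transposition.transpose i j) p a)"
proof -
  have "(\<Sum>j\<in>{1..N} - {i}. tau (Transposition.transpose i j) *v vdivdiff N i j (vmulx i p) a)
     = (\<Sum>j\<in>{1..N} - {i}. tau (Transposition.transpose i j) *v vmulx i (vdivdiff N i j p) a
        + tau (Transposition.transpose i j) *v vsubst (Transposition.transpose i j) p a)"
  proof (rule sum.cong[OF refl])
    fix j assume j: "j \<in> {1..N} - {i}"
    then have ij: "i \<noteq> j" and j': "j \<in> {1..N}" by auto
    show "tau (Transposition.transpose i j) *v vdivdiff N i j (vmulx i p) a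
      = tau (Transposition.transpose i j) *v vmulx i (vdivdiff N i j p) a
        + tau (Transposition.transpose i j) *v vsubst (Transposition.transpose i j) p a"
      by (simp add: divdiff_mulx[OF ij i j' p] matrix_vector_right_distrib)
  qed
  then show ?thesis
    unfolding vmulx_dunkl dunkl_def[of N tau i "vmulx i p"] vderiv_mulx
    by (simp add: sum.distrib vector_add_ldistrib algebra_simps)
qed

lemma cherednik_eq:
  assumes i: "i \<in> {1..N}" and p: "is_vpoly N p"
  shows "cherednik N tau i p a = vmulx i (dunkl N tau i p) a + (p a + kappa *s jucys_murphy N tau i p a)"
proof -
  let ?f = "\<lambda>j. tau (Transposition.transpose i j) *v vsubst (Transposition.transpose i j) p a"
  have U: "{1..N} - {i} = {1..<i} \<union> {i+1..N}" using i by auto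
  have "sum ?f ({1..N} - {i}) = sum ?f {1..<i} + sum ?f {i+1..N}"
    unfolding U by (rule sum.union_disjoint) auto
  moreover have "jucys_murphy N tau i p a = sum ?f {i+1..N}"
    by (simp add: jucys_murphy_def vact_def)
  ultimately show ?thesis
    unfolding cherednik_def dunkl_mulx[OF i p]
    by (simp add: vector_add_ldistrib algebra_simps)
qed

theorem proposition6p1:
  fixes N i :: nat
    and tau :: "(nat \<Rightarrow> nat) \<Rightarrow> rk^'n::finite^'n"
    and p :: "'n vpoly"
  assumes "is_rep N tau" and "irreducible_rep N tau"
    and "is_vpoly N p" and "1 \<le> i" and "i \<le> N"
  shows "dunkl N tau i p = (\<lambda>_. 0) \<longleftrightarrow>
         cherednik N tau i p = (\<lambda>a. p a + kappa *s jucys_murphy N tau i p a)"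
proof -
  have i: "i \<in> {1..N}" using assms by auto
  have "cherednik N tau i p = (\<lambda>a. p a + kappa *s jucys_murphy N tau i p a)
     \<longleftrightarrow> (\<forall>a. vmulx i (dunkl N tau i p) a = 0)"
    unfolding fun_eq_iff cherednik_eq[OF i assms(3)] by simp
  also have "\<dots> \<longleftrightarrow> dunkl N tau i p = (\<lambda>_. 0)"
  proof
    assume h: "\<forall>a. vmulx i (dunkl N tau i p) a = 0"
    show "dunkl N tau i p = (\<lambda>_. 0)"
    proof
      fix a show "dunkl N tau i p a = 0" using h[rule_format, of "a(i := a i + 1)"]
        by (simp only: vmulx_shift)
    qed
  next
    assume "dunkl N tau i p = (\<lambda>_. 0)"
    then show "\<forall>a. vmulx i (dunkl N tau i p) a = 0" by (simp add: vmulx_def)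
  qed
  finally show ?thesis by simp
qed

end
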